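(* With the notation of the context, for every $\varepsilon>0$, \[ w_0-\mathfrak r(\varepsilon)^2\le w_\varepsilon\le w_0\qquad\text{in }U.\]
   Context: Let $U\subset\mathbb{R}^n$ be a smooth bounded domain, and let $\varphi_0\in C^2(U)\cap C(\overline U)$ be positive somewhere in $U$, negative on $\partial U$, and satisfy $\lambda\le-\Delta\varphi_0\le\lambda^{-1}$ in $U$ for some $\lambda\in(0,1]$. Let $\psi:\mathbb{R}^n\to\mathbb{R}$ be a smooth $\mathbb{Z}^n$-periodic function with $-1\le\psi\le0$, and let $p\in\mathbb{R}$. For $\varepsilon>0$ set $\varphi_\varepsilon(x)=\varphi_0(x)+\varepsilon^p\psi(x/\varepsilon)$. Let $u_0$ be the least function $v$ with $\Delta v\le0$ in $U$, $v\ge\varphi_0$ in $U$, $v\ge0$ on $\partial U$; let $u_\varepsilon$ be the least function $v$ with $\Delta v\le 0$ in $U$, $v\ge\varphi_\varepsilon$ in $U$, $v\ge0$ on $\partial U$. Set $w_0=u_0-\varphi_0$, $w_\varepsilon=u_\varepsilon-\varphi_0$. For $\mu>0$, let $\chi_\mu$ be the least $\mathbb{Z}^n$-periodic function $v$ on $\mathbb{R}^n$ with $\Delta v\le\mu$ in $\mathbb{R}^n$ and $v\ge\psi$ in $\mathbb{R}^n$, and $\mathcal E(\mu)=-\inf\chi_\mu$. Define $\mathfrak r(\varepsilon)=\big(\varepsilon^p\,\mathcal E(\lambda^{-1}\varepsilon^{2-p})\big)^{1/2}$. *)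

theory Defs
  imports "HOL-Analysis.Analysis"
begin

fun dd :: "'a::euclidean_space list \<Rightarrow> ('a \<Rightarrow> real) \<Rightarrow> 'a \<Rightarrow> real" where
  "dd [] f = f"
| "dd (v # vs) f = (\<lambda>x. deriv (\<lambda>t. dd vs f (x + t *\<^sub>R v)) 0)"

definition Ck_on :: "nat \<Rightarrow> 'a::euclidean_space set \<Rightarrow> ('a \<Rightarrow> real) \<Rightarrow> bool" where
  "Ck_on k S f \<longleftrightarrow>
     (\<forall>vs. set vs \<subseteq> Basis \<and> length vs \<le> k \<longrightarrow>
        continuous_on S (dd vs f) \<and>
        (length vs < k \<longrightarrow>
           (\<forall>v\<in>Basis. \<forall>x\<in>S. (\<lambda>t. dd vs f (x + t *\<^sub>R v)) differentiable (at 0))))"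

definition smooth_on :: "'a::euclidean_space set \<Rightarrow> ('a \<Rightarrow> real) \<Rightarrow> bool" where
  "smooth_on S f \<longleftrightarrow> (\<forall>k. Ck_on k S f)"

definition laplacian :: "('a::euclidean_space \<Rightarrow> real) \<Rightarrow> 'a \<Rightarrow> real" where
  "laplacian f x = (\<Sum>v\<in>Basis. dd [v, v] f x)"

definition smooth_bounded_domain :: "'a::euclidean_space set \<Rightarrow> bool" where
  "smooth_bounded_domain U \<longleftrightarrow> open U \<and> connected U \<and> bounded U \<and> U \<noteq> {} \<and>
     (\<exists>\<rho>. smooth_on UNIV \<rho> \<and> U = {x. \<rho> x < 0} \<and>
          (\<forall>x. \<rho> x = 0 \<longrightarrow> (\<exists>v\<in>Basis. dd [v] \<rho> x \<noteq> 0)))"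

text \<open>Viscosity sense of "\<Delta>v \<le> c in S" (S open): whenever a C^2 function touches
  v from below at x0, its Laplacian at x0 is \<le> c.\<close>
definition visc_super :: "'a::euclidean_space set \<Rightarrow> real \<Rightarrow> ('a \<Rightarrow> real) \<Rightarrow> bool" where
  "visc_super S c v \<longleftrightarrow>
     (\<forall>x0\<in>S. \<forall>\<phi> r. r > 0 \<longrightarrow> ball x0 r \<subseteq> S \<longrightarrow> Ck_on 2 (ball x0 r) \<phi> \<longrightarrow>
        \<phi> x0 = v x0 \<longrightarrow> (\<forall>y\<in>ball x0 r. \<phi> y \<le> v y) \<longrightarrow> laplacian \<phi> x0 \<le> c)"

definition obst_adm :: "'a::euclidean_space set \<Rightarrow> ('a \<Rightarrow> real) \<Rightarrow> ('a \<Rightarrow> real) \<Rightarrow> bool" where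
  "obst_adm U g v \<longleftrightarrow> continuous_on (closure U) v \<and> visc_super U 0 v \<and>
     (\<forall>x\<in>U. g x \<le> v x) \<and> (\<forall>x\<in>frontier U. 0 \<le> v x)"

definition least_obst :: "'a::euclidean_space set \<Rightarrow> ('a \<Rightarrow> real) \<Rightarrow> ('a \<Rightarrow> real) \<Rightarrow> bool" where
  "least_obst U g v \<longleftrightarrow> obst_adm U g v \<and>
     (\<forall>w. obst_adm U g w \<longrightarrow> (\<forall>x\<in>closure U. v x \<le> w x))"

definition Zn_periodic :: "('a::euclidean_space \<Rightarrow> real) \<Rightarrow> bool" where
  "Zn_periodic f \<longleftrightarrow> (\<forall>x. \<forall>k\<in>Basis. f (x + k) = f x)"

definition cell_adm :: "real \<Rightarrow> ('a::euclidean_space \<Rightarrow> real) \<Rightarrow> ('a \<Rightarrow> real) \<Rightarrow> bool" where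
  "cell_adm \<mu> \<psi> v \<longleftrightarrow> Zn_periodic v \<and> continuous_on UNIV v \<and> visc_super UNIV \<mu> v \<and>
     (\<forall>x. \<psi> x \<le> v x)"

definition least_cell :: "real \<Rightarrow> ('a::euclidean_space \<Rightarrow> real) \<Rightarrow> ('a \<Rightarrow> real) \<Rightarrow> bool" where
  "least_cell \<mu> \<psi> v \<longleftrightarrow> cell_adm \<mu> \<psi> v \<and> (\<forall>w. cell_adm \<mu> \<psi> w \<longrightarrow> (\<forall>x. v x \<le> w x))"

end

theory Submission
  imports Defs
begin


lemma dd_step_deriv:
  fixes f g :: "'a::euclidean_space \<Rightarrow> real"
  assumes S: "open S" and f: "Ck_on k S f" and g: "Ck_on k T g"
    and ST: "\<And>x. x\<in>S \<Longrightarrow> a *\<^sub>R x + b \<in> T"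
    and vs: "set vs \<subseteq> Basis" "length vs < k" and v: "v \<in> Basis" and x: "x \<in> S"
    and IH: "\<forall>y\<in>S. dd vs F y = dd vs f y + c * a ^ length vs * dd vs g (a *\<^sub>R y + b)"
  shows "((\<lambda>t. dd vs F (x + t *\<^sub>R v)) has_field_derivative
      (dd (v#vs) f x + c * a ^ length (v#vs) * dd (v#vs) g (a *\<^sub>R x + b))) (at 0)"
proof -
  define Sx where "Sx = {t::real. x + t *\<^sub>R v \<in> S}"
  have "Sx = (\<lambda>t. x + t *\<^sub>R v) -` S" by (auto simp: Sx_def)
  hence oSx: "open Sx" by (simp only:) (rule open_vimage[OF S], intro continuous_intros)
  have "0 \<in> Sx" using x by (simp add: Sx_def)
  have d1: "(\<lambda>t. dd vs f (x + t *\<^sub>R v)) differentiable (at 0)"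
    using f vs v x unfolding Ck_on_def by auto
  have d2: "(\<lambda>t. dd vs g ((a *\<^sub>R x + b) + t *\<^sub>R v)) differentiable (at 0)"
    using g vs v ST[OF x] unfolding Ck_on_def by auto
  have D1: "((\<lambda>t. dd vs f (x + t *\<^sub>R v)) has_field_derivative dd (v#vs) f x) (at 0)"
    using d1 by (simp add: DERIV_deriv_iff_real_differentiable)
  have D2: "((\<lambda>t. dd vs g ((a *\<^sub>R x + b) + t *\<^sub>R v)) has_field_derivative dd (v#vs) g (a *\<^sub>R x + b)) (at (a*0))"
    using d2 by (simp add: DERIV_deriv_iff_real_differentiable)
  have D3: "((\<lambda>t. dd vs g ((a *\<^sub>R x + b) + (a*t) *\<^sub>R v)) has_field_derivative dd (v#vs) g (a *\<^sub>R x + b) * a) (at 0)"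
    using DERIV_chain2[where g="\<lambda>t. a*t" and x=0, OF D2] by (auto intro!: derivative_eq_intros)
  have D4: "((\<lambda>t. dd vs f (x + t *\<^sub>R v) + c * a ^ length vs * dd vs g ((a *\<^sub>R x + b) + (a*t) *\<^sub>R v))
      has_field_derivative (dd (v#vs) f x + c * a ^ length vs * (dd (v#vs) g (a *\<^sub>R x + b) * a))) (at 0)"
    by (rule DERIV_add[OF D1 DERIV_cmult[OF D3, of "c * a ^ length vs"]])
  show ?thesis
  proof (rule has_field_derivative_transform_within_open[OF _ oSx \<open>0 \<in> Sx\<close>])
    show "((\<lambda>t. dd vs f (x + t *\<^sub>R v) + c * a ^ length vs * dd vs g ((a *\<^sub>R x + b) + (a*t) *\<^sub>R v))
      has_field_derivative (dd (v#vs) f x + c * a ^ length (v#vs) * dd (v#vs) g (a *\<^sub>R x + b))) (at 0)"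
      using D4 by (simp add: algebra_simps)
  next
    fix t assume "t \<in> Sx"
    hence "x + t *\<^sub>R v \<in> S" by (simp add: Sx_def)
    moreover have "a *\<^sub>R (x + t *\<^sub>R v) + b = (a *\<^sub>R x + b) + (a*t) *\<^sub>R v"
      by (simp add: algebra_simps)
    ultimately show "dd vs f (x + t *\<^sub>R v) + c * a ^ length vs * dd vs g ((a *\<^sub>R x + b) + (a*t) *\<^sub>R v)
        = dd vs F (x + t *\<^sub>R v)" using IH by metis
  qed
qed

lemma has_real_der_differentiable:
  "(f has_field_derivative D) (at x) \<Longrightarrow> f differentiable (at x)" for f :: "real \<Rightarrow> real"
  using DERIV_deriv_iff_real_differentiable DERIV_imp_deriv by metis

lemma Ck_comb_dd:
  fixes f g :: "'a::euclidean_space \<Rightarrow> real"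
  assumes S: "open S" and f: "Ck_on k S f" and g: "Ck_on k T g"
    and ST: "\<And>x. x\<in>S \<Longrightarrow> a *\<^sub>R x + b \<in> T"
  shows "set vs \<subseteq> Basis \<Longrightarrow> length vs \<le> k \<Longrightarrow> \<forall>y\<in>S.
     dd vs (\<lambda>x. f x + c * g (a *\<^sub>R x + b)) y = dd vs f y + c * a ^ length vs * dd vs g (a *\<^sub>R y + b)"
proof (induction vs)
  case Nil
  then show ?case by simp
next
  case (Cons v vs)
  have IH: "\<forall>y\<in>S. dd vs (\<lambda>x. f x + c * g (a *\<^sub>R x + b)) y = dd vs f y + c * a ^ length vs * dd vs g (a *\<^sub>R y + b)"
    using Cons by auto
  show ?case
  proof
    fix y assume y: "y \<in> S"
    have "dd (v#vs) (\<lambda>x. f x + c * g (a *\<^sub>R x + b)) y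
        = deriv (\<lambda>t. dd vs (\<lambda>x. f x + c * g (a *\<^sub>R x + b)) (y + t *\<^sub>R v)) 0" by simp
    also have "\<dots> = dd (v#vs) f y + c * a ^ length (v#vs) * dd (v#vs) g (a *\<^sub>R y + b)"
      by (rule DERIV_imp_deriv, rule dd_step_deriv[OF S f g ST _ _ _ y IH]) (use Cons.prems in auto)
    finally show "dd (v#vs) (\<lambda>x. f x + c * g (a *\<^sub>R x + b)) y = dd (v#vs) f y + c * a ^ length (v#vs) * dd (v#vs) g (a *\<^sub>R y + b)" .
  qed
qed

lemma Ck_comb:
  fixes f g :: "'a::euclidean_space \<Rightarrow> real"
  assumes S: "open S" and f: "Ck_on k S f" and g: "Ck_on k T g"
    and ST: "\<And>x. x\<in>S \<Longrightarrow> a *\<^sub>R x + b \<in> T"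
  shows "Ck_on k S (\<lambda>x. f x + c * g (a *\<^sub>R x + b))"
  unfolding Ck_on_def
proof (intro allI impI conjI ballI)
  fix vs :: "'a list" assume vs: "set vs \<subseteq> Basis \<and> length vs \<le> k"
  note eq = Ck_comb_dd[OF S f g ST, of vs c] 
  have c1: "continuous_on S (dd vs f)" using f vs by (auto simp: Ck_on_def)
  have c2: "continuous_on T (dd vs g)" using g vs by (auto simp: Ck_on_def)
  have c3: "continuous_on S (\<lambda>y. dd vs g (a *\<^sub>R y + b))"
    by (rule continuous_on_compose2[OF c2]) (auto intro!: continuous_intros ST)
  have "continuous_on S (\<lambda>y. dd vs f y + c * a ^ length vs * dd vs g (a *\<^sub>R y + b))"
    by (intro continuous_intros c1 c3)
  then show "continuous_on S (dd vs (\<lambda>x. f x + c * g (a *\<^sub>R x + b)))"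
    by (rule continuous_on_cong[THEN iffD1, rotated -1]) (use eq vs in auto)
  fix v x :: 'a assume lt: "length vs < k" and v: "v \<in> Basis" and x: "x \<in> S"
  show "(\<lambda>t. dd vs (\<lambda>x. f x + c * g (a *\<^sub>R x + b)) (x + t *\<^sub>R v)) differentiable (at 0)"
    by (rule has_real_der_differentiable, rule dd_step_deriv[OF S f g ST _ lt v x]) (use eq vs in auto)
qed

lemma Ck_on_mono: "Ck_on k S f \<Longrightarrow> T \<subseteq> S \<Longrightarrow> Ck_on k T f"
  unfolding Ck_on_def by (meson continuous_on_subset subsetD)

lemma dd_const: "dd vs (\<lambda>_. c) = (\<lambda>_. if vs = [] then c else 0)"
proof (induction vs)
  case (Cons v vs) then show ?case by (auto intro!: ext)
qed simp

lemma Ck_const: "Ck_on k S (\<lambda>_. c)"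
  unfolding Ck_on_def dd_const by auto

lemma Ck_onD: "Ck_on k S f \<Longrightarrow> set vs \<subseteq> Basis \<Longrightarrow> length vs < k \<Longrightarrow> v \<in> Basis \<Longrightarrow> x \<in> S
  \<Longrightarrow> (\<lambda>t. dd vs f (x + t *\<^sub>R v)) differentiable (at 0)"
  unfolding Ck_on_def by auto

lemma lap_comb:
  fixes f g :: "'a::euclidean_space \<Rightarrow> real"
  assumes S: "open S" and f: "Ck_on 2 S f" and g: "Ck_on 2 T g"
    and ST: "\<And>x. x\<in>S \<Longrightarrow> a *\<^sub>R x + b \<in> T" and y: "y \<in> S"
  shows "laplacian (\<lambda>x. f x + c * g (a *\<^sub>R x + b)) y = laplacian f y + c * a^2 * laplacian g (a *\<^sub>R y + b)"
proof -
  have "\<And>v. v \<in> Basis \<Longrightarrow> dd [v,v] (\<lambda>x. f x + c * g (a *\<^sub>R x + b)) y = dd [v,v] f y + c * a^2 * dd [v,v] g (a *\<^sub>R y + b)"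
    using Ck_comb_dd[OF S f g ST, of "[v,v]" c for v] y by (simp add: power2_eq_square del: dd.simps)
  then show ?thesis unfolding laplacian_def by (simp add: sum.distrib sum_distrib_left del: dd.simps)
qed

lemma dd2_max:
  fixes \<phi> :: "'a::euclidean_space \<Rightarrow> real"
  assumes C: "Ck_on 2 (ball x0 r) \<phi>" and r: "r > 0" and le: "\<forall>y\<in>ball x0 r. \<phi> y \<le> \<phi> x0"
    and v: "v \<in> Basis"
  shows "dd [v,v] \<phi> x0 \<le> 0"
proof (rule ccontr)
  assume "\<not> dd [v,v] \<phi> x0 \<le> 0"
  hence pos: "dd [v,v] \<phi> x0 > 0" by simp
  define h where "h t = \<phi> (x0 + t *\<^sub>R v)" for t
  define g where "g t = dd [v] \<phi> (x0 + t *\<^sub>R v)" for t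
  have nv: "norm v = 1" using v by simp
  have inb: "x0 + t *\<^sub>R v \<in> ball x0 r" if "\<bar>t\<bar> < r" for t
    using that nv by (simp add: dist_norm)
  have Hd: "(h has_field_derivative g t) (at t)" if "\<bar>t\<bar> < r" for t
  proof -
    have "(\<lambda>s. dd [] \<phi> ((x0 + t *\<^sub>R v) + s *\<^sub>R v)) differentiable (at 0)"
      using Ck_onD[OF C, of "[]" v] v inb[OF that] by simp
    hence "((\<lambda>s. \<phi> ((x0 + t *\<^sub>R v) + s *\<^sub>R v)) has_field_derivative g t) (at 0)"
      by (simp add: g_def DERIV_deriv_iff_real_differentiable)
    moreover have "(\<lambda>s. \<phi> ((x0 + t *\<^sub>R v) + s *\<^sub>R v)) = (\<lambda>s. h (s + t))"
      by (auto simp: h_def algebra_simps)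
    ultimately have "((\<lambda>s. h (s + t)) has_field_derivative g t) (at 0)" by simp
    thus ?thesis using DERIV_shift[of h "g t" 0 t] by simp
  qed
  have G: "(g has_field_derivative dd [v,v] \<phi> x0) (at 0)"
  proof -
    have "(\<lambda>t. dd [v] \<phi> (x0 + t *\<^sub>R v)) differentiable (at 0)"
      using Ck_onD[OF C, of "[v]" v x0] v r by simp
    moreover have "dd [v,v] \<phi> x0 = deriv (\<lambda>t. dd [v] \<phi> (x0 + t *\<^sub>R v)) 0"
      by (subst dd.simps(2)) (rule refl)
    ultimately show ?thesis unfolding g_def by (simp only: DERIV_deriv_iff_real_differentiable)
  qed
  have g0: "g 0 = 0"
    by (rule DERIV_local_max[OF Hd[of 0] r]) (use r le inb in \<open>auto simp: h_def\<close>)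
  obtain d where d: "d > 0" "\<forall>t>0. t < d \<longrightarrow> g 0 < g (0 + t)"
    using DERIV_pos_inc_right[OF G pos] by blast
  define t where "t = min d r / 2"
  have t: "0 < t" "t < d" "t < r" using d r by (auto simp: t_def)
  obtain z where z: "0 < z" "z < t" "h t - h 0 = (t - 0) * g z"
    using MVT2[OF t(1), of h g] Hd t by force
  have "g z > 0" using d z t g0 by auto
  hence "h t > h 0" using z t by (smt (verit) mult_pos_pos)
  moreover have "h t \<le> h 0" using le inb[of t] t by (simp add: h_def)
  ultimately show False by simp
qed

lemma lap_max:
  fixes \<phi> :: "'a::euclidean_space \<Rightarrow> real"
  assumes C: "Ck_on 2 (ball x0 r) \<phi>" and r: "r > 0" and le: "\<forall>y\<in>ball x0 r. \<phi> y \<le> \<phi> x0"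
  shows "laplacian \<phi> x0 \<le> 0"
  unfolding laplacian_def by (rule sum_nonpos) (use dd2_max[OF C r le] in blast)



inductive_set Lat :: "'a::euclidean_space set" where
  Lat0: "0 \<in> Lat"
| LatP: "k \<in> Lat \<Longrightarrow> b \<in> Basis \<Longrightarrow> k + b \<in> Lat"
| LatM: "k \<in> Lat \<Longrightarrow> b \<in> Basis \<Longrightarrow> k - b \<in> Lat"

lemma Lat_per:
  assumes per: "Zn_periodic f" and k: "k \<in> Lat"
  shows "f (x + k) = f x"
  using k
proof (induction k arbitrary: x)
  case Lat0 then show ?case by simp
next
  case (LatP k b)
  have "f (x + (k + b)) = f ((x + k) + b)" by (simp add: add.assoc)
  also have "\<dots> = f (x + k)" using per LatP.hyps(2) by (simp add: Zn_periodic_def)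
  finally show ?case using LatP.IH by simp
next
  case (LatM k b)
  have "f (x + k) = f ((x + (k - b)) + b)" by (simp add: algebra_simps)
  also have "\<dots> = f (x + (k - b))" using per LatM.hyps(2) unfolding Zn_periodic_def by blast
  finally show ?case using LatM.IH by simp
qed

lemma Lat_shift:
  assumes b: "b \<in> Basis" shows "(\<lambda>k. b + k) ` Lat = (Lat :: 'a::euclidean_space set)"
proof
  show "(\<lambda>k. b + k) ` Lat \<subseteq> Lat" using LatP[OF _ b] by (auto simp: add.commute)
  show "Lat \<subseteq> (\<lambda>k. b + k) ` Lat"
  proof
    fix k :: 'a assume "k \<in> Lat"
    hence "k - b \<in> Lat" using LatM b by blast
    moreover have "k = b + (k - b)" by simp
    ultimately show "k \<in> (\<lambda>k. b + k) ` Lat" by blast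
  qed
qed

lemma Lat_int: "k \<in> Lat \<Longrightarrow> c \<in> Basis \<Longrightarrow> k \<bullet> c \<in> \<int>"
proof (induction k rule: Lat.induct)
  case Lat0 then show ?case by simp
next
  case (LatP k b) then show ?case by (auto simp: inner_add_left inner_Basis)
next
  case (LatM k b) then show ?case by (auto simp: inner_diff_left inner_Basis)
qed

lemma finite_Ints_bounded: "finite {x::real. x \<in> \<int> \<and> \<bar>x\<bar> \<le> R}"
proof (rule finite_subset)
  show "{x::real. x \<in> \<int> \<and> \<bar>x\<bar> \<le> R} \<subseteq> of_int ` {-\<lceil>R\<rceil>..\<lceil>R\<rceil>}"
  proof
    fix x :: real assume "x \<in> {x. x \<in> \<int> \<and> \<bar>x\<bar> \<le> R}"
    then obtain n where n: "x = of_int n" "\<bar>of_int n\<bar> \<le> R" by (auto elim: Ints_cases)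
    hence "\<bar>n\<bar> \<le> \<lceil>R\<rceil>" by linarith
    thus "x \<in> of_int ` {-\<lceil>R\<rceil>..\<lceil>R\<rceil>}" using n by (intro image_eqI[of _ _ n]) (auto simp: abs_le_iff)
  qed
qed auto

lemma Lat_finite: "finite {k \<in> (Lat :: 'a::euclidean_space set). norm k \<le> R}"
proof -
  let ?A = "{k \<in> (Lat :: 'a set). norm k \<le> R}"
  let ?h = "\<lambda>k::'a. restrict (\<lambda>b. k \<bullet> b) Basis"
  have inj: "inj_on ?h ?A"
  proof
    fix x y assume "x \<in> ?A" "y \<in> ?A" and e: "?h x = ?h y"
    show "x = y"
    proof (rule euclidean_eqI)
      fix b :: 'a assume b: "b \<in> Basis"
      show "x \<bullet> b = y \<bullet> b" using fun_cong[OF e, of b] b by simp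
    qed
  qed
  have "?h ` ?A \<subseteq> PiE Basis (\<lambda>_. {x::real. x \<in> \<int> \<and> \<bar>x\<bar> \<le> R})"
  proof
    fix z assume "z \<in> ?h ` ?A"
    then obtain k where k: "k \<in> Lat" "norm k \<le> R" "z = ?h k" by auto
    have "\<And>b. b \<in> Basis \<Longrightarrow> \<bar>k \<bullet> b\<bar> \<le> R" using k Basis_le_norm order_trans by blast
    thus "z \<in> PiE Basis (\<lambda>_. {x::real. x \<in> \<int> \<and> \<bar>x\<bar> \<le> R})" using k Lat_int by auto
  qed
  moreover have "finite (PiE Basis (\<lambda>_. {x::real. x \<in> \<int> \<and> \<bar>x\<bar> \<le> R}))"
    by (intro finite_PiE finite_Basis finite_Ints_bounded)
  ultimately have "finite (?h ` ?A)" by (rule finite_subset)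
  thus ?thesis using inj finite_imageD by blast
qed



lemma chi_nonpos:
  assumes chi: "least_cell \<mu> \<psi> X" and mu: "\<mu> \<ge> 0" and psi: "\<forall>x. \<psi> x \<le> 0"
  shows "X x \<le> 0"
proof -
  have "cell_adm \<mu> \<psi> (\<lambda>_. 0)"
    unfolding cell_adm_def Zn_periodic_def visc_super_def
  proof (intro conjI allI ballI impI)
    fix x0 :: 'a and \<phi> r
    assume r: "0 < r" and C: "Ck_on 2 (ball x0 r) \<phi>" and e: "\<phi> x0 = 0" and le: "\<forall>y\<in>ball x0 r. \<phi> y \<le> 0"
    have le': "\<forall>y\<in>ball x0 r. \<phi> y \<le> \<phi> x0" using e le by simp
    have "laplacian \<phi> x0 \<le> 0" by (rule lap_max[OF C r le'])
    then show "laplacian \<phi> x0 \<le> \<mu>" using mu by simp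
  qed (use psi in auto)
  then show ?thesis using chi unfolding least_cell_def by auto
qed

lemma Inf_img_le:
  fixes f h :: "'b \<Rightarrow> real"
  assumes K: "K \<noteq> {}" and fB: "\<forall>k\<in>K. B \<le> f k" and hB: "\<forall>k\<in>K. B \<le> h k"
    and fh: "\<forall>k\<in>K. f k \<le> h k + e"
  shows "Inf (f ` K) \<le> Inf (h ` K) + e"
proof -
  have "Inf (f ` K) - e \<le> Inf (h ` K)"
  proof (rule cInf_greatest)
    show "h ` K \<noteq> {}" using K by simp
    fix y assume "y \<in> h ` K"
    then obtain k where k: "k \<in> K" "y = h k" by auto
    have "Inf (f ` K) \<le> f k" by (rule cInf_lower) (use k fB in \<open>auto intro!: bdd_belowI[of _ B]\<close>)
    then show "Inf (f ` K) - e \<le> y" using fh k by force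
  qed
  then show ?thesis by simp
qed

lemma dist_scale_shift: "dist ((e::real) *\<^sub>R (x' + k)) (e *\<^sub>R (x + k)) = \<bar>e\<bar> * dist x' (x::'a::real_normed_vector)"
  by (simp add: dist_norm flip: scaleR_diff_right)



lemma main_lower:
  fixes U :: "'a::euclidean_space set" and \<phi>0 \<psi> u X :: "'a \<Rightarrow> real"
  assumes Uo: "open U" and Ub: "bounded U"
    and phi0_C2: "Ck_on 2 U \<phi>0" and phi0_cont: "continuous_on (closure U) \<phi>0"
    and phi0_bdry: "\<forall>x\<in>frontier U. \<phi>0 x < 0"
    and lapb: "\<forall>x\<in>U. - laplacian \<phi>0 x \<le> 1 / lam" and lam: "lam > 0"
    and psi_per: "Zn_periodic \<psi>" and psi_bds: "\<forall>x. -1 \<le> \<psi> x \<and> \<psi> x \<le> 0"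
    and eps: "\<epsilon> > 0" and c: "c > 0" and mu: "\<mu> = \<epsilon>^2 / (c * lam)"
    and uadm: "obst_adm U (\<lambda>x. \<phi>0 x + c * \<psi> ((1/\<epsilon>) *\<^sub>R x)) u"
    and chi: "least_cell \<mu> \<psi> X"
  shows "\<forall>x\<in>U. c * X ((1/\<epsilon>) *\<^sub>R x) \<le> u x - \<phi>0 x"
proof -
  have mupos: "\<mu> > 0" using mu eps c lam by simp
  have chi_le0: "\<And>y. X y \<le> 0" using chi_nonpos[OF chi] mupos psi_bds by auto
  have chiadm: "cell_adm \<mu> \<psi> X" using chi by (simp add: least_cell_def)
  hence chi_vs: "visc_super UNIV \<mu> X" and chi_cont: "continuous_on UNIV X"
    and chi_per: "Zn_periodic X" and chi_ge: "\<forall>x. \<psi> x \<le> X x"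
    by (auto simp: cell_adm_def)
  have ucont: "continuous_on (closure U) u" and uvs: "visc_super U 0 u"
    and uge: "\<forall>x\<in>U. \<phi>0 x + c * \<psi> ((1/\<epsilon>) *\<^sub>R x) \<le> u x" and ubd: "\<forall>x\<in>frontier U. 0 \<le> u x"
    using uadm by (auto simp: obst_adm_def)
  define g where "g x = (u x - \<phi>0 x) / c" for x
  define D where "D x = (if x \<in> U then min 0 (g x) else 0)" for x
  have gcont: "continuous_on (closure U) g"
    unfolding g_def using c by (intro continuous_intros ucont phi0_cont) auto
  have Dge: "\<psi> ((1/\<epsilon>) *\<^sub>R x) \<le> D x" for x
  proof (cases "x \<in> U")
    case True
    have "\<psi> ((1/\<epsilon>) *\<^sub>R x) \<le> g x"
      using uge True c by (simp add: g_def pos_le_divide_eq mult.commute algebra_simps)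
    then show ?thesis using True psi_bds by (simp add: D_def)
  qed (use psi_bds in \<open>simp add: D_def\<close>)
  have Dle: "D x \<le> 0" for x by (simp add: D_def)
  have Dlow: "-1 \<le> D x" for x using Dge[of x] psi_bds[rule_format, of "(1/\<epsilon>) *\<^sub>R x"] by linarith
  have front: "\<forall>x\<in>frontier U. \<exists>\<delta>>0. \<forall>y\<in>U. dist y x < \<delta> \<longrightarrow> 0 < g y"
  proof
    fix x assume x: "x \<in> frontier U"
    hence xc: "x \<in> closure U" by (simp add: frontier_def)
    have "u x - \<phi>0 x > 0" using x ubd phi0_bdry by fastforce
    hence gx: "g x > 0" using c by (simp add: g_def)
    obtain d where d: "d > 0" "\<forall>y\<in>closure U. dist y x < d \<longrightarrow> dist (g y) (g x) < g x"
      using gcont xc gx unfolding continuous_on_iff by blast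
    show "\<exists>\<delta>>0. \<forall>y\<in>U. dist y x < \<delta> \<longrightarrow> 0 < g y"
    proof (intro exI[of _ d] conjI ballI impI)
      fix y assume "y \<in> U" "dist y x < d"
      hence "dist (g y) (g x) < g x" using d closure_subset by blast
      thus "0 < g y" by (simp add: dist_real_def)
    qed (use d in auto)
  qed
  have Dcont: "isCont D x" for x
  proof -
    consider "x \<in> U" | "x \<notin> closure U" | "x \<in> frontier U"
      using Uo by (auto simp: frontier_def interior_open)
    then show ?thesis
    proof cases
      case 1
      have "eventually (\<lambda>y. D y = min 0 (g y)) (nhds x)"
        using eventually_nhds_in_open[OF Uo 1] by eventually_elim (simp add: D_def)
      moreover have "isCont (\<lambda>y. min 0 (g y)) x"
        using continuous_on_interior[OF continuous_on_subset[OF gcont closure_subset], of x] 1 Uo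
        by (auto simp: interior_open intro!: continuous_intros)
      ultimately show ?thesis by (rule isCont_cong[THEN iffD2])
    next
      case 2
      have "eventually (\<lambda>y. D y = 0) (nhds x)"
      proof -
        have "eventually (\<lambda>y. y \<in> - closure U) (nhds x)"
          by (rule eventually_nhds_in_open) (use 2 in auto)
        then show ?thesis
          by eventually_elim (use closure_subset in \<open>auto simp: D_def\<close>)
      qed
      then show ?thesis using isCont_cong[of D "\<lambda>_. 0"] by auto
    next
      case 3
      obtain d where d: "d > 0" "\<forall>y\<in>U. dist y x < d \<longrightarrow> 0 < g y" using front 3 by blast
      have "eventually (\<lambda>y. D y = 0) (nhds x)"
        using eventually_nhds_in_open[OF open_ball, of x x d] d
        by (auto elim!: eventually_mono simp: D_def dist_commute)
      then show ?thesis using isCont_cong[of D "\<lambda>_. 0"] by auto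
    qed
  qed
  obtain R where R: "R > 0" "U \<subseteq> ball 0 R" using bounded_subset_ballD[OF Ub] by blast
  have Dunif: "\<forall>e>0. \<exists>\<delta>>0. \<forall>x x'. dist x x' < \<delta> \<longrightarrow> dist (D x) (D x') < e"
  proof (intro allI impI)
    fix e :: real assume e: "e > 0"
    have "uniformly_continuous_on (cball 0 (R+1)) D"
      by (rule compact_uniformly_continuous) (auto intro!: continuous_at_imp_continuous_on Dcont)
    then obtain d where d: "d > 0" "\<forall>x\<in>cball 0 (R+1). \<forall>x'\<in>cball 0 (R+1). dist x' x < d \<longrightarrow> dist (D x') (D x) < e"
      using e unfolding uniformly_continuous_on_def by blast
    have out: "D x = 0" if "norm x \<ge> R" for x
    proof -
      have "x \<notin> U" using R that by (auto simp: dist_norm)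
      thus ?thesis by (simp add: D_def)
    qed
    show "\<exists>\<delta>>0. \<forall>x x'. dist x x' < \<delta> \<longrightarrow> dist (D x) (D x') < e"
    proof (intro exI[of _ "min d 1"] conjI allI impI)
      fix x x' :: 'a assume dd: "dist x x' < min d 1"
      have t1: "norm x \<le> norm x' + dist x x'" "norm x' \<le> norm x + dist x x'"
        using norm_triangle_sub[of x x'] norm_triangle_sub[of x' x]
        by (auto simp: dist_norm norm_minus_commute)
      show "dist (D x) (D x') < e"
      proof (cases "norm x \<le> R + 1 \<and> norm x' \<le> R + 1")
        case True
        then show ?thesis using d dd by (auto simp: dist_commute)
      next
        case False
        hence "norm x \<ge> R" "norm x' \<ge> R" using t1 dd by auto
        then show ?thesis using out e by simp
      qed
    qed (use d in auto)
  qed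
  define I where "I y = Inf ((\<lambda>k. D (\<epsilon> *\<^sub>R (y + k))) ` Lat)" for y
  define w where "w y = min (X y) (I y)" for y
  have Lne: "(Lat :: 'a set) \<noteq> {}" using Lat0 by blast
  have I_le: "I y \<le> D (\<epsilon> *\<^sub>R (y + k))" if "k \<in> Lat" for y k
    unfolding I_def by (rule cInf_lower) (use that Dlow in \<open>auto intro!: bdd_belowI[of _ "-1"]\<close>)
  have I_ge: "\<psi> y \<le> I y" for y
    unfolding I_def
  proof (rule cInf_greatest)
    show "(\<lambda>k. D (\<epsilon> *\<^sub>R (y + k))) ` Lat \<noteq> {}" using Lne by simp
    fix z assume "z \<in> (\<lambda>k. D (\<epsilon> *\<^sub>R (y + k))) ` Lat"
    then obtain k where k: "k \<in> Lat" "z = D (\<epsilon> *\<^sub>R (y + k))" by auto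
    have "\<psi> y = \<psi> (y + k)" using Lat_per[OF psi_per k(1)] by simp
    also have "\<dots> = \<psi> ((1/\<epsilon>) *\<^sub>R (\<epsilon> *\<^sub>R (y + k)))" using eps by simp
    also have "\<dots> \<le> z" using Dge[of "\<epsilon> *\<^sub>R (y + k)"] k by simp
    finally show "\<psi> y \<le> z" .
  qed
  have I_per: "I (y + b) = I y" if "b \<in> Basis" for y b
  proof -
    have "(\<lambda>k. D (\<epsilon> *\<^sub>R (y + b + k))) ` Lat = (\<lambda>k. D (\<epsilon> *\<^sub>R (y + k))) ` ((\<lambda>k. b + k) ` Lat)"
      by (simp add: image_image add.assoc)
    also have "\<dots> = (\<lambda>k. D (\<epsilon> *\<^sub>R (y + k))) ` Lat" using Lat_shift[OF that] by simp
    finally show ?thesis by (simp add: I_def)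
  qed
  have I_close: "I x' \<le> I x + e" if "\<forall>k. D (\<epsilon> *\<^sub>R (x' + k)) \<le> D (\<epsilon> *\<^sub>R (x + k)) + e" for x x' e
    unfolding I_def by (rule Inf_img_le[OF Lne, of "-1"]) (use that Dlow in auto)
  have I_cont: "continuous_on UNIV I"
    unfolding continuous_on_iff
  proof (intro ballI allI impI)
    fix x :: 'a and e :: real assume e: "e > 0"
    obtain d where d: "d > 0" "\<forall>x x'. dist x x' < d \<longrightarrow> dist (D x) (D x') < e/2"
      using Dunif e by (meson half_gt_zero)
    show "\<exists>\<delta>>0. \<forall>x'\<in>UNIV. dist x' x < \<delta> \<longrightarrow> dist (I x') (I x) < e"
    proof (intro exI[of _ "d/\<epsilon>"] conjI ballI impI)
      fix x' assume "dist x' x < d/\<epsilon>"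
      hence dk: "dist (\<epsilon> *\<^sub>R (x' + k)) (\<epsilon> *\<^sub>R (x + k)) < d" for k
        using eps by (simp add: dist_scale_shift pos_less_divide_eq mult.commute)
      have "\<forall>k. D (\<epsilon> *\<^sub>R (x' + k)) \<le> D (\<epsilon> *\<^sub>R (x + k)) + e/2"
        using d dk by (smt (verit) dist_real_def)
      moreover have "\<forall>k. D (\<epsilon> *\<^sub>R (x + k)) \<le> D (\<epsilon> *\<^sub>R (x' + k)) + e/2"
        using d dk by (smt (verit) dist_real_def dist_commute)
      ultimately have "I x' \<le> I x + e/2" "I x \<le> I x' + e/2" using I_close by blast+
      thus "dist (I x') (I x) < e" using e by (simp add: dist_real_def abs_le_iff)
    qed (use d eps in auto)
  qed
  have w_visc: "visc_super UNIV \<mu> w"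
    unfolding visc_super_def
  proof (intro ballI allI impI)
    fix x0 :: 'a and \<phi> :: "'a \<Rightarrow> real" and r :: real
    assume r: "0 < r" and rU: "ball x0 r \<subseteq> UNIV" and C: "Ck_on 2 (ball x0 r) \<phi>"
      and eq: "\<phi> x0 = w x0" and le: "\<forall>y\<in>ball x0 r. \<phi> y \<le> w y"
    show "laplacian \<phi> x0 \<le> \<mu>"
    proof (cases "X x0 \<le> I x0")
      case True
      have "\<phi> x0 = X x0" using eq True by (simp add: w_def)
      moreover have "\<forall>y\<in>ball x0 r. \<phi> y \<le> X y" using le by (auto simp: w_def)
      ultimately show ?thesis using chi_vs r C unfolding visc_super_def by blast
    next
      case False
      hence Ilt: "I x0 < X x0" and wI: "w x0 = I x0" by (auto simp: w_def)
      have Ineg: "I x0 < 0" using Ilt chi_le0[of x0] by simp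
      obtain k where k: "k \<in> Lat" "D (\<epsilon> *\<^sub>R (x0 + k)) = I x0"
      proof -
        define K where "K = {k \<in> (Lat :: 'a set). norm k \<le> R/\<epsilon> + norm x0}"
        define F where "F = (\<lambda>k. D (\<epsilon> *\<^sub>R (x0 + k))) ` K"
        have fF: "finite F" unfolding F_def K_def by (intro finite_imageI Lat_finite)
        have alt: "D (\<epsilon> *\<^sub>R (x0 + k)) = 0 \<or> k \<in> K" if kL: "k \<in> Lat" for k
        proof (cases "\<epsilon> *\<^sub>R (x0 + k) \<in> U")
          case True
          hence "norm (\<epsilon> *\<^sub>R (x0 + k)) < R" using R by (auto simp: dist_norm)
          hence "\<epsilon> * norm (x0 + k) < R" using eps by simp
          hence "norm (x0 + k) < R / \<epsilon>" using eps by (simp add: pos_less_divide_eq mult.commute)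
          moreover have "norm k \<le> norm (x0 + k) + norm x0"
            using norm_triangle_ineq4[of "x0 + k" x0] by simp
          ultimately show ?thesis using kL by (auto simp: K_def)
        qed (simp add: D_def)
        define m where "m = Min (insert 0 F)"
        have mle: "m \<le> y" if "y \<in> insert 0 F" for y using fF that by (simp add: m_def)
        have mge: "m \<le> I x0" unfolding I_def
        proof (rule cInf_greatest)
          show "(\<lambda>k. D (\<epsilon> *\<^sub>R (x0 + k))) ` Lat \<noteq> {}" using Lne by simp
          fix y assume "y \<in> (\<lambda>k. D (\<epsilon> *\<^sub>R (x0 + k))) ` Lat"
          then obtain k where "k \<in> Lat" "y = D (\<epsilon> *\<^sub>R (x0 + k))" by auto
          then show "m \<le> y" using alt mle by (auto simp: F_def)
        qed
        have "m \<in> insert 0 F" unfolding m_def by (rule Min_in) (use fF in auto)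
        moreover have "m \<noteq> 0" using mge Ineg by auto
        ultimately have "m \<in> F" by simp
        then obtain k where kK: "k \<in> K" and mk: "m = D (\<epsilon> *\<^sub>R (x0 + k))" by (auto simp: F_def)
        have kL: "k \<in> Lat" using kK by (simp add: K_def)
        have "I x0 \<le> m" using I_le[OF kL] mk by simp
        hence "D (\<epsilon> *\<^sub>R (x0 + k)) = I x0" using mge mk by simp
        then show ?thesis using that kL by blast
      qed
      define z0 where "z0 = \<epsilon> *\<^sub>R (x0 + k)"
      have z0U: "z0 \<in> U" using k Ineg by (auto simp: z0_def D_def split: if_splits)
      have gz0: "g z0 = I x0" using k Ineg z0U by (auto simp: z0_def D_def)
      obtain \<rho> where \<rho>: "\<rho> > 0" "ball z0 \<rho> \<subseteq> U" using Uo z0U openE by blast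
      define r' where "r' = min r (\<rho>/\<epsilon>)"
      have r'1: "r' > 0" using r \<rho> eps by (simp add: r'_def)
      have r'2: "r' \<le> r" "r' \<le> \<rho>/\<epsilon>" by (simp_all add: r'_def)
      have r'3: "\<epsilon> * r' \<le> \<rho>" using r'2(2) eps by (simp add: pos_le_divide_eq mult.commute)
      note r' = r'1 r'2(1) r'3
      define S' where "S' = ball z0 (\<epsilon> * r')"
      have S'U: "S' \<subseteq> U" using \<rho> r' by (auto simp: S'_def)
      have mapb: "(1/\<epsilon>) *\<^sub>R x + - k \<in> ball x0 r'" if "x \<in> S'" for x
      proof -
        have "x0 - ((1/\<epsilon>) *\<^sub>R x + - k) = (1/\<epsilon>) *\<^sub>R (z0 - x)"
          using eps by (simp add: z0_def algebra_simps)
        hence "dist x0 ((1/\<epsilon>) *\<^sub>R x + - k) = (1/\<epsilon>) * dist z0 x"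
          using eps by (simp add: dist_norm)
        also have "\<dots> < (1/\<epsilon>) * (\<epsilon> * r')" using that eps by (simp add: S'_def pos_divide_less_eq mult.commute)
        also have "\<dots> = r'" using eps by simp
        finally show ?thesis by simp
      qed
      have mapT: "(1/\<epsilon>) *\<^sub>R x + - k \<in> ball x0 r" if "x \<in> S'" for x
        using mapb[OF that] r' by auto
      define \<Phi> where "\<Phi> x = \<phi>0 x + c * \<phi> ((1/\<epsilon>) *\<^sub>R x + - k)" for x
      have CP: "Ck_on 2 S' \<Phi>" unfolding \<Phi>_def S'_def
        by (rule Ck_comb[OF open_ball Ck_on_mono[OF phi0_C2 S'U, unfolded S'_def] C mapT[unfolded S'_def]])
      have z0m: "(1/\<epsilon>) *\<^sub>R z0 + - k = x0" using eps by (simp add: z0_def)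
      have Pz0: "\<Phi> z0 = u z0"
      proof -
        have "\<Phi> z0 = \<phi>0 z0 + c * g z0" using z0m eq wI gz0 by (simp add: \<Phi>_def)
        also have "\<dots> = u z0" using c by (simp add: g_def)
        finally show ?thesis .
      qed
      have Ple: "\<forall>x\<in>S'. \<Phi> x \<le> u x"
      proof
        fix x assume x: "x \<in> S'"
        let ?y = "(1/\<epsilon>) *\<^sub>R x + - k"
        have xU: "x \<in> U" using x S'U by auto
        have "\<phi> ?y \<le> w ?y" using le mapT[OF x] by blast
        also have "\<dots> \<le> I ?y" by (simp add: w_def)
        also have "\<dots> \<le> D (\<epsilon> *\<^sub>R (?y + k))" by (rule I_le[OF k(1)])
        also have "\<epsilon> *\<^sub>R (?y + k) = x" using eps by simp
        also have "D x \<le> g x" using xU by (simp add: D_def)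
        finally have "\<phi> ?y \<le> (u x - \<phi>0 x) / c" by (simp add: g_def)
        hence "c * \<phi> ?y \<le> u x - \<phi>0 x" using c by (simp add: pos_le_divide_eq mult.commute)
        thus "\<Phi> x \<le> u x" by (simp add: \<Phi>_def)
      qed
      have "laplacian \<Phi> z0 \<le> 0"
        using uvs z0U CP Pz0 Ple S'U mult_pos_pos[OF eps r'(1)] unfolding visc_super_def S'_def by blast
      moreover have "laplacian \<Phi> z0 = laplacian \<phi>0 z0 + c * (1/\<epsilon>)^2 * laplacian \<phi> x0"
        unfolding \<Phi>_def
        using lap_comb[OF open_ball Ck_on_mono[OF phi0_C2 S'U, unfolded S'_def] C mapT[unfolded S'_def], of z0 c] eps r'
        using z0m by simp
      moreover have "- laplacian \<phi>0 z0 \<le> 1 / lam" using lapb z0U by blast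
      ultimately have L: "c * (1/\<epsilon>)^2 * laplacian \<phi> x0 \<le> 1 / lam" by linarith
      have "laplacian \<phi> x0 = (\<epsilon>^2 / c) * (c * (1/\<epsilon>)^2 * laplacian \<phi> x0)"
        using eps c by (simp add: field_simps power2_eq_square)
      also have "\<dots> \<le> (\<epsilon>^2 / c) * (1 / lam)"
        by (rule mult_left_mono[OF L]) (use c in simp)
      also have "\<dots> = \<mu>" using mu by simp
      finally show "laplacian \<phi> x0 \<le> \<mu>" .
    qed
  qed
  have wadm: "cell_adm \<mu> \<psi> w"
    unfolding cell_adm_def
  proof (intro conjI)
    show "Zn_periodic w" using chi_per I_per by (simp add: Zn_periodic_def w_def)
    show "continuous_on UNIV w" unfolding w_def by (intro continuous_intros chi_cont I_cont)
    show "visc_super UNIV \<mu> w" by (rule w_visc)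
    show "\<forall>x. \<psi> x \<le> w x" using chi_ge I_ge by (simp add: w_def)
  qed
  show ?thesis
  proof
    fix x assume x: "x \<in> U"
    let ?y = "(1/\<epsilon>) *\<^sub>R x"
    have "X ?y \<le> w ?y" using chi wadm by (simp add: least_cell_def)
    also have "\<dots> \<le> I ?y" by (simp add: w_def)
    also have "\<dots> \<le> D (\<epsilon> *\<^sub>R (?y + 0))" by (rule I_le) (rule Lat0)
    also have "\<dots> \<le> g x" using eps x by (simp add: D_def)
    finally have "X ?y \<le> (u x - \<phi>0 x) / c" by (simp add: g_def)
    then show "c * X ?y \<le> u x - \<phi>0 x" using c by (simp add: pos_le_divide_eq mult.commute)
  qed
qed



lemma lap_const: "laplacian (\<lambda>_. (1::real)) x = 0"
  unfolding laplacian_def dd_const by simp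

lemma visc_shift:
  assumes vs: "visc_super S 0 u"
  shows "visc_super S 0 (\<lambda>x. u x + C)"
  unfolding visc_super_def
proof (intro ballI allI impI)
  fix x0 \<phi> r assume x0: "x0 \<in> S" and r: "0 < (r::real)" and rS: "ball x0 r \<subseteq> S"
    and C: "Ck_on 2 (ball x0 r) \<phi>" and eq: "\<phi> x0 = u x0 + C"
    and le: "\<forall>y\<in>ball x0 r. \<phi> y \<le> u y + C"
  define \<phi>' where "\<phi>' x = \<phi> x + (- C) * (\<lambda>_. (1::real)) (1 *\<^sub>R x + 0)" for x
  have C': "Ck_on 2 (ball x0 r) \<phi>'" unfolding \<phi>'_def
    by (rule Ck_comb[OF open_ball C Ck_const[of 2 UNIV 1]]) simp
  have "laplacian \<phi>' x0 = laplacian \<phi> x0 + (- C) * 1^2 * laplacian (\<lambda>_. (1::real)) (1 *\<^sub>R x0 + 0)"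
    unfolding \<phi>'_def by (rule lap_comb[OF open_ball C Ck_const[of 2 UNIV 1]]) (use r in simp_all)
  hence L: "laplacian \<phi>' x0 = laplacian \<phi> x0" by (simp add: lap_const)
  have "laplacian \<phi>' x0 \<le> 0"
  proof -
    have e': "\<phi>' x0 = u x0" using eq by (simp add: \<phi>'_def)
    have le': "\<forall>y\<in>ball x0 r. \<phi>' y \<le> u y" using le by (auto simp: \<phi>'_def algebra_simps)
    show ?thesis using vs x0 r rS C' e' le' unfolding visc_super_def by blast
  qed
  thus "laplacian \<phi> x0 \<le> 0" using L by simp
qed

theorem proposition3p2:
  fixes U :: "'a::euclidean_space set"
    and \<phi>0 \<psi> u0 :: "'a \<Rightarrow> real"
    and u :: "real \<Rightarrow> 'a \<Rightarrow> real"
    and chi :: "real \<Rightarrow> 'a \<Rightarrow> real"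
    and lam p :: real
  assumes U: "smooth_bounded_domain U"
    and phi0_C2: "Ck_on 2 U \<phi>0"
    and phi0_cont: "continuous_on (closure U) \<phi>0"
    and phi0_pos: "\<exists>x\<in>U. \<phi>0 x > 0"
    and phi0_bdry: "\<forall>x\<in>frontier U. \<phi>0 x < 0"
    and lam: "0 < lam" "lam \<le> 1"
    and phi0_lap: "\<forall>x\<in>U. lam \<le> - laplacian \<phi>0 x \<and> - laplacian \<phi>0 x \<le> 1 / lam"
    and psi_smooth: "smooth_on UNIV \<psi>"
    and psi_per: "Zn_periodic \<psi>"
    and psi_bds: "\<forall>x. -1 \<le> \<psi> x \<and> \<psi> x \<le> 0"
    and u0: "least_obst U \<phi>0 u0"
    and ueps: "\<forall>\<epsilon>>0. least_obst U (\<lambda>x. \<phi>0 x + \<epsilon> powr p * \<psi> ((1 / \<epsilon>) *\<^sub>R x)) (u \<epsilon>)"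
    and chi_least: "\<forall>\<mu>>0. least_cell \<mu> \<psi> (chi \<mu>)"
  shows "\<forall>\<epsilon>>0. \<forall>x\<in>U.
     (let E = (\<lambda>\<mu>. - Inf (range (chi \<mu>)));
          r = sqrt (\<epsilon> powr p * E ((1 / lam) * \<epsilon> powr (2 - p)));
          w0 = u0 x - \<phi>0 x;
          we = u \<epsilon> x - \<phi>0 x
      in w0 - r\<^sup>2 \<le> we \<and> we \<le> w0)"
proof (intro allI impI ballI)
  fix \<epsilon> :: real and x :: 'a assume eps: "\<epsilon> > 0" and x: "x \<in> U"
  have Uo: "open U" and Ub: "bounded U" using U by (auto simp: smooth_bounded_domain_def)
  define \<mu> where "\<mu> = (1 / lam) * \<epsilon> powr (2 - p)"
  define c where "c = \<epsilon> powr p"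
  have c: "c > 0" using eps by (simp add: c_def)
  have mu: "\<mu> = \<epsilon>^2 / (c * lam)"
    using eps by (simp add: \<mu>_def c_def powr_diff powr_numeral)
  have mupos: "\<mu> > 0" using mu eps c lam by simp
  have chi: "least_cell \<mu> \<psi> (chi \<mu>)" using chi_least mupos by blast
  have uadm: "obst_adm U (\<lambda>x. \<phi>0 x + c * \<psi> ((1 / \<epsilon>) *\<^sub>R x)) (u \<epsilon>)"
    and uleast: "\<forall>w. obst_adm U (\<lambda>x. \<phi>0 x + c * \<psi> ((1 / \<epsilon>) *\<^sub>R x)) w \<longrightarrow> (\<forall>x\<in>closure U. u \<epsilon> x \<le> w x)"
    using ueps eps by (auto simp: least_obst_def c_def)
  have main: "\<forall>x\<in>U. c * chi \<mu> ((1/\<epsilon>) *\<^sub>R x) \<le> u \<epsilon> x - \<phi>0 x"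
    by (rule main_lower[OF Uo Ub phi0_C2 phi0_cont phi0_bdry _ lam(1) psi_per psi_bds eps c mu uadm chi])
       (use phi0_lap in auto)
  define E where "E = - Inf (range (chi \<mu>))"
  have chi_ge: "\<forall>y. \<psi> y \<le> chi \<mu> y" using chi by (simp add: least_cell_def cell_adm_def)
  have bdd: "bdd_below (range (chi \<mu>))"
    using chi_ge psi_bds by (intro bdd_belowI[of _ "-1"]) (auto intro: order_trans)
  have Inf_le: "Inf (range (chi \<mu>)) \<le> chi \<mu> y" for y by (rule cInf_lower[OF _ bdd]) simp
  have E0: "E \<ge> 0"
    using Inf_le[of 0] chi_nonpos[OF chi] mupos psi_bds unfolding E_def
    by (smt (verit) less_imp_le)
  have low: "\<forall>y\<in>U. \<phi>0 y \<le> u \<epsilon> y + c * E"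
  proof
    fix y assume y: "y \<in> U"
    have "c * (- E) \<le> c * chi \<mu> ((1/\<epsilon>) *\<^sub>R y)"
      using Inf_le c unfolding E_def by (intro mult_left_mono) auto
    thus "\<phi>0 y \<le> u \<epsilon> y + c * E" using main y by auto
  qed
  have adm1: "obst_adm U \<phi>0 (\<lambda>y. u \<epsilon> y + c * E)"
    unfolding obst_adm_def
  proof (intro conjI)
    show "continuous_on (closure U) (\<lambda>y. u \<epsilon> y + c * E)"
      using uadm by (auto simp: obst_adm_def intro!: continuous_intros)
    show "visc_super U 0 (\<lambda>y. u \<epsilon> y + c * E)"
      using uadm visc_shift by (auto simp: obst_adm_def)
    show "\<forall>y\<in>U. \<phi>0 y \<le> u \<epsilon> y + c * E" by (rule low)
    show "\<forall>y\<in>frontier U. 0 \<le> u \<epsilon> y + c * E"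
      using uadm E0 c by (auto simp: obst_adm_def)
  qed
  have l1: "u0 x \<le> u \<epsilon> x + c * E"
    using u0 adm1 x closure_subset unfolding least_obst_def by blast
  have adm2: "obst_adm U (\<lambda>x. \<phi>0 x + c * \<psi> ((1 / \<epsilon>) *\<^sub>R x)) u0"
    unfolding obst_adm_def
  proof (intro conjI)
    show "continuous_on (closure U) u0" "visc_super U 0 u0" "\<forall>x\<in>frontier U. 0 \<le> u0 x"
      using u0 by (auto simp: least_obst_def obst_adm_def)
    have "\<forall>y\<in>U. \<phi>0 y \<le> u0 y" using u0 by (auto simp: least_obst_def obst_adm_def)
    moreover have "c * \<psi> ((1 / \<epsilon>) *\<^sub>R y) \<le> 0" for y
      using c psi_bds by (simp add: mult_nonneg_nonpos less_imp_le)
    ultimately show "\<forall>y\<in>U. \<phi>0 y + c * \<psi> ((1 / \<epsilon>) *\<^sub>R y) \<le> u0 y"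
      by (smt (verit))
  qed
  have l2: "u \<epsilon> x \<le> u0 x" using uleast adm2 x closure_subset by blast
  have r2: "(sqrt (c * E))\<^sup>2 = c * E" using c E0 by simp
  show "let E = (\<lambda>\<mu>. - Inf (range (chi \<mu>)));
          r = sqrt (\<epsilon> powr p * E ((1 / lam) * \<epsilon> powr (2 - p)));
          w0 = u0 x - \<phi>0 x;
          we = u \<epsilon> x - \<phi>0 x
      in w0 - r\<^sup>2 \<le> we \<and> we \<le> w0"
    unfolding Let_def using l1 l2 r2 by (simp add: E_def \<mu>_def c_def)
qed


end
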